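(* Let $P=\mathbb{Q}[x_1,\dots,x_n]$, let $\sigma,\tau$ be two term orderings on $\mathbb{T}^n$, let $I$ be a non-zero ideal in $P$, and let $p$ be a prime which is $\sigma$-good for $I$. (a) If $p$ is $\tau$-good for $I$, then $O_\tau(I_{(p,\sigma)})=O_\tau(I)$. (b) If $p$ is $\tau$-bad for $I$, then $O_\tau(I_{(p,\sigma)})\prec_\tau O_\tau(I)$, and moreover $O_\tau(I)$ is not a proper prefix of $O_\tau(I_{(p,\sigma)})$.
   Context: $\mathbb{T}^n$ is the monoid of power-products in $x_1,\dots,x_n$. For $f\in P$, $\operatorname{den}(f)$ is the positive lcm of the denominators of its coefficients; $\operatorname{den}(G)$ is the lcm of $\operatorname{den}(g)$, $g\in G$. For a term ordering $\rho$ with $G_\rho$ the reduced $\rho$-Gröbner basis of $I$, $p$ is $\rho$-good for $I$ if $p\nmid\operatorname{den}(G_\rho)$ and $\rho$-bad otherwise. For $\sigma$-good $p$, $\pi_p$ is coefficientwise reduction modulo $p$ into $\mathbb{F}_p[x_1,\dots,x_n]$, and $I_{(p,\sigma)}$ is the ideal of $\mathbb{F}_p[x_1,\dots,x_n]$ generated by $\pi_p(G_\sigma)$. A tuple $(t_1,\dots,t_r)$ of distinct power-products is $\tau$-ordered if $t_1<_\tau\cdots<_\tau t_r$. For an ideal $J$ in a polynomial ring over a field, $O_\tau(J)$ is the $\tau$-ordered tuple of the leading terms of a minimal $\tau$-Gröbner basis of $J$ (the minimal power-product generators of $\mathrm{LT}_\tau(J)$). For $\tau$-ordered tuples $T=(t_1,\dots,t_r)$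 and $T'=(t'_1,\dots,t'_{r'})$, $T'\prec_\tau T$ means either $T$ is a proper prefix of $T'$ (i.e. $r<r'$ and $t_i=t'_i$ for $i\le r$), or there is $k\le\min(r,r')$ with $t_i=t'_i$ for $i<k$ and $t'_k<_\tau t_k$. *)

theory Defs
  imports "HOL-Library.Poly_Mapping" "Berlekamp_Zassenhaus.Finite_Field"
begin

text \<open>Power-products in the variables of a finite type 'x are exponent vectors
  'x =>0 nat (monoid operation +, unit 0); polynomials with coefficients in 'a
  are finitely supported maps from power-products to coefficients.\<close>

type_synonym 'x pp = "'x \<Rightarrow>\<^sub>0 nat"
type_synonym ('x, 'a) mpoly = "'x pp \<Rightarrow>\<^sub>0 'a"

definition pp_dvd :: "'x pp \<Rightarrow> 'x pp \<Rightarrow> bool" where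
  "pp_dvd s t \<longleftrightarrow> (\<exists>u. t = s + u)"

definition term_order :: "('x pp \<Rightarrow> 'x pp \<Rightarrow> bool) \<Rightarrow> bool" where
  "term_order ord \<longleftrightarrow>
     (\<forall>s. ord s s) \<and> (\<forall>s t. ord s t \<and> ord t s \<longrightarrow> s = t) \<and>
     (\<forall>s t u. ord s t \<and> ord t u \<longrightarrow> ord s u) \<and> (\<forall>s t. ord s t \<or> ord t s) \<and>
     (\<forall>t. ord 0 t) \<and> (\<forall>s t u. ord s t \<longrightarrow> ord (s + u) (t + u))"

definition is_ideal :: "('x, 'a::comm_ring_1) mpoly set \<Rightarrow> bool" where
  "is_ideal J \<longleftrightarrow> 0 \<in> J \<and> (\<forall>a\<in>J. \<forall>b\<in>J. a + b \<in> J) \<and> (\<forall>a\<in>J. \<forall>r. r * a \<in> J)"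

definition ideal_gen :: "('x, 'a::comm_ring_1) mpoly set \<Rightarrow> ('x, 'a) mpoly set" where
  "ideal_gen G = \<Inter>{J. is_ideal J \<and> G \<subseteq> J}"

definition lt :: "('x pp \<Rightarrow> 'x pp \<Rightarrow> bool) \<Rightarrow> ('x, 'a::zero) mpoly \<Rightarrow> 'x pp" where
  "lt ord f = (THE t. t \<in> Poly_Mapping.keys f \<and> (\<forall>s\<in>Poly_Mapping.keys f. ord s t))"

definition lc :: "('x pp \<Rightarrow> 'x pp \<Rightarrow> bool) \<Rightarrow> ('x, 'a::zero) mpoly \<Rightarrow> 'a" where
  "lc ord f = Poly_Mapping.lookup f (lt ord f)"

definition LTs :: "('x pp \<Rightarrow> 'x pp \<Rightarrow> bool) \<Rightarrow> ('x, 'a::zero) mpoly set \<Rightarrow> 'x pp set" where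
  "LTs ord J = {lt ord f | f. f \<in> J \<and> f \<noteq> 0}"

definition is_GB :: "('x pp \<Rightarrow> 'x pp \<Rightarrow> bool) \<Rightarrow> ('x, 'a::field) mpoly set
    \<Rightarrow> ('x, 'a) mpoly set \<Rightarrow> bool" where
  "is_GB ord J G \<longleftrightarrow> finite G \<and> G \<subseteq> J \<and> ideal_gen G = J \<and>
     (\<forall>f\<in>J. f \<noteq> 0 \<longrightarrow> (\<exists>g\<in>G. g \<noteq> 0 \<and> pp_dvd (lt ord g) (lt ord f)))"

definition is_reduced_GB :: "('x pp \<Rightarrow> 'x pp \<Rightarrow> bool) \<Rightarrow> ('x, 'a::field) mpoly set
    \<Rightarrow> ('x, 'a) mpoly set \<Rightarrow> bool" where
  "is_reduced_GB ord J G \<longleftrightarrow> is_GB ord J G \<and> 0 \<notin> G \<and>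
     (\<forall>g\<in>G. lc ord g = 1) \<and>
     (\<forall>g\<in>G. \<forall>g'\<in>G. g \<noteq> g' \<longrightarrow> (\<forall>t\<in>Poly_Mapping.keys g. \<not> pp_dvd (lt ord g') t))"

definition den_rat :: "rat \<Rightarrow> int" where
  "den_rat c = snd (quotient_of c)"

definition den_poly :: "('x, rat) mpoly \<Rightarrow> int" where
  "den_poly f = Lcm (den_rat ` range (Poly_Mapping.lookup f))"

definition den_set :: "('x, rat) mpoly set \<Rightarrow> int" where
  "den_set G = Lcm (den_poly ` G)"

definition good :: "('x, rat) mpoly set \<Rightarrow> nat \<Rightarrow> bool" where
  "good G p \<longleftrightarrow> \<not> (int p dvd den_set G)"

text \<open>Coefficientwise reduction modulo p = CARD('p) into F_p.\<close>
definition red_rat :: "rat \<Rightarrow> 'p::prime_card mod_ring" where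
  "red_rat c = of_int (fst (quotient_of c)) / of_int (snd (quotient_of c))"

definition red_poly :: "('x, rat) mpoly \<Rightarrow> ('x, 'p::prime_card mod_ring) mpoly" where
  "red_poly f = Poly_Mapping.map red_rat f"

definition min_gens :: "('x pp \<Rightarrow> 'x pp \<Rightarrow> bool) \<Rightarrow> ('x, 'a::zero) mpoly set \<Rightarrow> 'x pp set" where
  "min_gens ord J = {t \<in> LTs ord J. \<forall>s\<in>LTs ord J. pp_dvd s t \<longrightarrow> s = t}"

definition O_tuple :: "('x pp \<Rightarrow> 'x pp \<Rightarrow> bool) \<Rightarrow> ('x, 'a::zero) mpoly set \<Rightarrow> 'x pp list" where
  "O_tuple ord J = (THE xs. set xs = min_gens ord J \<and> sorted_wrt (\<lambda>s t. ord s t \<and> s \<noteq> t) xs)"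

definition proper_prefix_of :: "'b list \<Rightarrow> 'b list \<Rightarrow> bool" where
  "proper_prefix_of T T' \<longleftrightarrow> length T < length T' \<and> take (length T) T' = T"

text \<open>tuple_less ord T' T  means  T' \<prec> T.\<close>
definition tuple_less :: "('x pp \<Rightarrow> 'x pp \<Rightarrow> bool) \<Rightarrow> 'x pp list \<Rightarrow> 'x pp list \<Rightarrow> bool" where
  "tuple_less ord T' T \<longleftrightarrow> proper_prefix_of T T' \<or>
     (\<exists>k < min (length T) (length T'). take k T' = take k T \<and>
        ord (T' ! k) (T ! k) \<and> T' ! k \<noteq> T ! k)"

end

theory Submission
  imports Defs "HOL-Library.Ramsey"
begin

section \<open>Term orders\<close>

lemma to_refl: "term_order ord \<Longrightarrow> ord s s" by (simp add: term_order_def)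
lemma to_antisym: "term_order ord \<Longrightarrow> ord s t \<Longrightarrow> ord t s \<Longrightarrow> s = t"
  unfolding term_order_def by blast
lemma to_trans: "term_order ord \<Longrightarrow> ord s t \<Longrightarrow> ord t u \<Longrightarrow> ord s u"
  unfolding term_order_def by blast
lemma to_total: "term_order ord \<Longrightarrow> ord s t \<or> ord t s"
  unfolding term_order_def by blast
lemma to_zero: "term_order ord \<Longrightarrow> ord 0 t"
  unfolding term_order_def by blast
lemma to_mono: "term_order ord \<Longrightarrow> ord s t \<Longrightarrow> ord (s + u) (t + u)"
  unfolding term_order_def by blast
lemma to_mono_left: "term_order ord \<Longrightarrow> ord s t \<Longrightarrow> ord (u + s) (u + t)"
  using to_mono[of ord s t u] by (simp add: add.commute)

lemma to_dvd: "term_order ord \<Longrightarrow> pp_dvd s t \<Longrightarrow> ord s t"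
  unfolding pp_dvd_def using to_mono[of ord 0 _ s] to_zero[of ord]
  by (metis add.commute add_0)

lemma pp_dvd_antisym: "term_order (ord::'x pp \<Rightarrow> _) \<Longrightarrow> pp_dvd (s::'x pp) t \<Longrightarrow> pp_dvd t s \<Longrightarrow> s = t"
  using to_dvd[of ord s t] to_dvd[of ord t s] to_antisym[of ord s t] by blast

lemma pp_dvd_trans: "pp_dvd s t \<Longrightarrow> pp_dvd t u \<Longrightarrow> pp_dvd s u"
  unfolding pp_dvd_def by (metis add.assoc)

lemma pp_dvd_refl: "pp_dvd s s"
  unfolding pp_dvd_def by (metis add_0_right)

section \<open>Dickson\<close>

lemma no_infinite_desc:
  fixes g :: "nat \<Rightarrow> nat"
  assumes inf: "infinite Y" and dec: "\<forall>i\<in>Y. \<forall>j\<in>Y. i < j \<longrightarrow> g j < g i"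
  shows False
proof -
  obtain i0 where i0: "i0 \<in> Y" using inf by (metis finite.emptyI ex_in_conv)
  let ?Z = "{j\<in>Y. i0 < j}"
  have inj: "inj_on g ?Z"
    by (rule inj_onI) (metis (no_types, lifting) dec mem_Collect_eq nat_neq_iff)
  have "g ` ?Z \<subseteq> {..<g i0}" using dec i0 by auto
  hence "finite (g ` ?Z)" by (rule finite_subset) simp
  hence "finite ?Z" using inj finite_imageD by blast
  moreover have "Y \<subseteq> {..i0} \<union> ?Z" by auto
  ultimately have "finite Y" by (meson finite_Un finite_atMost finite_subset)
  thus False using inf by simp
qed

lemma dickson_aux:
  fixes F :: "nat \<Rightarrow> ('x \<Rightarrow>\<^sub>0 nat)"
  assumes "finite V"
  shows "infinite Z \<Longrightarrow> \<exists>Y\<subseteq>Z. infinite Y \<and>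
    (\<forall>i\<in>Y. \<forall>j\<in>Y. i < j \<longrightarrow> (\<forall>v\<in>V. Poly_Mapping.lookup (F i) v \<le> Poly_Mapping.lookup (F j) v))"
  using assms
proof (induction V arbitrary: Z rule: finite_induct)
  case empty
  then show ?case by (intro exI[of _ Z]) simp
next
  case (insert v V)
  obtain Y where Y: "Y \<subseteq> Z" "infinite Y"
    "\<forall>i\<in>Y. \<forall>j\<in>Y. i < j \<longrightarrow> (\<forall>v\<in>V. Poly_Mapping.lookup (F i) v \<le> Poly_Mapping.lookup (F j) v)"
    using insert.IH[OF insert.prems] by blast
  define col where "col X = (if Poly_Mapping.lookup (F (Min X)) v \<le> Poly_Mapping.lookup (F (Max X)) v then 0 else 1::nat)" for X
  have "\<forall>x\<in>Y. \<forall>y\<in>Y. x \<noteq> y \<longrightarrow> col {x, y} < 2" by (simp add: col_def)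
  from Ramsey2[OF Y(2) this] obtain Y' t where Y': "Y' \<subseteq> Y" "infinite Y'" "t < 2"
    "\<forall>x\<in>Y'. \<forall>y\<in>Y'. x \<noteq> y \<longrightarrow> col {x, y} = t" by blast
  have mm: "Min {i, j} = i" "Max {i,j} = j" if "i < j" for i j :: nat
    using that by auto
  show ?case
  proof (cases "t = 0")
    case True
    have "\<forall>i\<in>Y'. \<forall>j\<in>Y'. i < j \<longrightarrow> Poly_Mapping.lookup (F i) v \<le> Poly_Mapping.lookup (F j) v"
    proof (intro ballI impI)
      fix i j assume "i \<in> Y'" "j \<in> Y'" "i < j"
      hence "col {i,j} = 0" using Y'(4)[rule_format, of i j] True by simp
      thus "Poly_Mapping.lookup (F i) v \<le> Poly_Mapping.lookup (F j) v" using mm[OF \<open>i<j\<close>]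
        by (simp add: col_def split: if_splits)
    qed
    thus ?thesis using Y Y' by (intro exI[of _ Y']) blast
  next
    case False
    have "\<forall>i\<in>Y'. \<forall>j\<in>Y'. i < j \<longrightarrow> Poly_Mapping.lookup (F j) v < Poly_Mapping.lookup (F i) v"
    proof (intro ballI impI)
      fix i j assume "i \<in> Y'" "j \<in> Y'" "i < j"
      hence "col {i,j} = t" using Y'(4)[rule_format, of i j] by simp
      thus "Poly_Mapping.lookup (F j) v < Poly_Mapping.lookup (F i) v" using mm[OF \<open>i<j\<close>] False
        by (simp add: col_def not_le split: if_splits)
    qed
    with no_infinite_desc[where g="\<lambda>i. Poly_Mapping.lookup (F i) v", OF Y'(2)] show ?thesis by blast
  qed
qed

lemma dickson:
  fixes F :: "nat \<Rightarrow> ('x::finite \<Rightarrow>\<^sub>0 nat)"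
  shows "\<exists>i j. i < j \<and> pp_dvd (F i) (F j)"
proof -
  obtain Y where Y: "infinite Y"
    "\<forall>i\<in>Y. \<forall>j\<in>Y. i < j \<longrightarrow> (\<forall>v\<in>UNIV. Poly_Mapping.lookup (F i) v \<le> Poly_Mapping.lookup (F j) v)"
    using dickson_aux[where V=UNIV and Z="UNIV::nat set" and F=F] by auto
  obtain i where i: "i \<in> Y" using Y(1) by (metis finite.emptyI ex_in_conv)
  obtain j where j: "j \<in> Y" "i < j"
    using Y(1) unfolding infinite_nat_iff_unbounded by blast
  have le: "\<forall>v. Poly_Mapping.lookup (F i) v \<le> Poly_Mapping.lookup (F j) v" using Y(2) i j by blast
  have "F j = F i + (F j - F i)"
    by (rule poly_mapping_eqI) (simp add: lookup_add lookup_minus le)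
  thus ?thesis using j unfolding pp_dvd_def by blast
qed

definition strict :: "('x pp \<Rightarrow> 'x pp \<Rightarrow> bool) \<Rightarrow> ('x pp \<times> 'x pp) set" where
  "strict ord = {(s, t). ord s t \<and> s \<noteq> t}"

lemma wf_strict:
  fixes ord :: "('x::finite) pp \<Rightarrow> 'x pp \<Rightarrow> bool"
  assumes to: "term_order ord"
  shows "wf (strict ord)"
proof (rule ccontr)
  assume "\<not> wf (strict ord)"
  then obtain f where f: "\<forall>i. (f (Suc i), f i) \<in> strict ord"
    unfolding wf_iff_no_infinite_down_chain by blast
  have le: "ord (f j) (f i)" if "i \<le> j" for i j
    using that
  proof (induction j)
    case 0 thus ?case using to_refl[OF to] by simp
  next
    case (Suc j)
    show ?case
    proof (cases "i = Suc j")
      case True thus ?thesis using to_refl[OF to] by simp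
    next
      case False
      hence "ord (f j) (f i)" using Suc by simp
      moreover have "ord (f (Suc j)) (f j)" using f by (simp add: strict_def)
      ultimately show ?thesis using to_trans[OF to] by blast
    qed
  qed
  obtain i j where ij: "i < j" "pp_dvd (f i) (f j)" using dickson by blast
  hence "f i = f j" using to_antisym[OF to] to_dvd[OF to] le[of i j] by simp
  moreover have "ord (f j) (f (Suc i))" using le ij by simp
  moreover have "ord (f (Suc i)) (f i)" "f (Suc i) \<noteq> f i" using f by (auto simp: strict_def)
  ultimately have "f (Suc i) = f j" using to_antisym[OF to, of "f (Suc i)" "f j"] by simp
  thus False using \<open>f i = f j\<close> \<open>f (Suc i) \<noteq> f i\<close> by simp
qed

lemma antichain_finite:
  fixes S :: "('x::finite) pp set"
  assumes "\<forall>s\<in>S. \<forall>t\<in>S. pp_dvd s t \<longrightarrow> s = t"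
  shows "finite S"
proof (rule ccontr)
  assume "infinite S"
  then obtain F :: "nat \<Rightarrow> _" where F: "inj F" "range F \<subseteq> S"
    using infinite_countable_subset by blast
  obtain i j where "i < j" "pp_dvd (F i) (F j)" using dickson by blast
  hence "F i = F j" using assms F(2) by blast
  thus False using F(1) \<open>i<j\<close> by (simp add: inj_eq)
qed

lemma ex_min_fun:
  assumes tot: "\<forall>a b. R a b \<or> R b a" and tr: "\<forall>a b c. R a b \<longrightarrow> R b c \<longrightarrow> R a c"
    and fin: "finite B" and ne: "B \<noteq> {}"
  shows "\<exists>b\<in>B. \<forall>b'\<in>B. R (F b) (F b')"
  using fin ne
proof (induction B rule: finite_ne_induct)
  case (singleton x)
  then show ?case using tot by auto
next
  case (insert x B)
  then obtain b where b: "b \<in> B" "\<forall>b'\<in>B. R (F b) (F b')" by blast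
  show ?case
  proof (cases "R (F x) (F b)")
    case True
    then show ?thesis using b tr tot by blast
  next
    case False
    then show ?thesis using b tot by blast
  qed
qed

lemma lt_eqI:
  assumes to: "term_order ord" and "t \<in> Poly_Mapping.keys f"
    and "\<forall>s\<in>Poly_Mapping.keys f. ord s t"
  shows "lt ord f = t"
  unfolding lt_def
  by (rule the_equality) (use assms to_antisym[OF to] in blast)+

lemma lt_prop:
  assumes to: "term_order ord" and f: "f \<noteq> 0"
  shows "lt ord f \<in> Poly_Mapping.keys f \<and> (\<forall>s\<in>Poly_Mapping.keys f. ord s (lt ord f))"
proof -
  have "Poly_Mapping.keys f \<noteq> {}" using f by simp
  moreover have "\<forall>a b. ord b a \<or> ord a b" using to_total[OF to] by blast
  moreover have "\<forall>a b c. ord b a \<longrightarrow> ord c b \<longrightarrow> ord c a" using to_trans[OF to] by blast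
  ultimately obtain t where t: "t \<in> Poly_Mapping.keys f" "\<forall>s\<in>Poly_Mapping.keys f. ord s t"
    using ex_min_fun[where R="\<lambda>a b. ord b a" and B="Poly_Mapping.keys f" and F=id]
    by auto
  thus ?thesis using lt_eqI[OF to t] by simp
qed

lemma lt_in_keys: "term_order ord \<Longrightarrow> f \<noteq> 0 \<Longrightarrow> lt ord f \<in> Poly_Mapping.keys f"
  using lt_prop by blast
lemma lt_max:
  assumes "term_order ord" "s \<in> Poly_Mapping.keys f" shows "ord s (lt ord f)"
proof -
  have "f \<noteq> 0" using assms(2) by auto
  thus ?thesis using lt_prop[OF assms(1)] assms(2) by blast
qed
lemma lc_nonzero: "term_order ord \<Longrightarrow> f \<noteq> 0 \<Longrightarrow> lc ord f \<noteq> 0"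
  using lt_in_keys unfolding lc_def by (simp add: in_keys_iff)

lemma lookup_shift:
  fixes h :: "'x pp \<Rightarrow>\<^sub>0 'a::comm_semiring_1"
  shows "Poly_Mapping.lookup (Poly_Mapping.single u 1 * h) (u + t) = Poly_Mapping.lookup h t"
proof -
  have "Poly_Mapping.lookup (Poly_Mapping.single u 1 * h) (u + t)
     = (\<Sum>l. ((\<Sum>q. Poly_Mapping.lookup h q when u + t = l + q) when u = l))"
    unfolding lookup_mult lookup_single by (rule Sum_any.cong) (simp add: when_def)
  also have "\<dots> = (\<Sum>q. Poly_Mapping.lookup h q when u + t = u + q)"
    by (rule Sum_any_when_equal')
  also have "\<dots> = (\<Sum>q. Poly_Mapping.lookup h q when t = q)"
    by (rule Sum_any.cong) simp
  also have "\<dots> = Poly_Mapping.lookup h t" by (rule Sum_any_when_equal')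
  finally show ?thesis .
qed

lemma lookup_single_mult:
  fixes g :: "'x pp \<Rightarrow>\<^sub>0 'a::comm_semiring_1"
  shows "Poly_Mapping.lookup (Poly_Mapping.single u c * g) (u + t) = c * Poly_Mapping.lookup g t"
proof -
  have "Poly_Mapping.single u c = Poly_Mapping.single u 1 * Poly_Mapping.single 0 c"
    by (simp add: mult_single)
  hence "Poly_Mapping.single u c * g = Poly_Mapping.single u 1 * (Poly_Mapping.single 0 c * g)"
    by (simp add: mult.assoc)
  moreover have "Poly_Mapping.single 0 c * g = Poly_Mapping.map ((*) c) g"
    by (simp add: mult_map_scale_conv_mult)
  ultimately show ?thesis by (simp add: lookup_shift map.rep_eq when_def)
qed


lemma keys_single_mult:
  fixes g :: "'x pp \<Rightarrow>\<^sub>0 'a::comm_semiring_1"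
  shows "Poly_Mapping.keys (Poly_Mapping.single u c * g) \<subseteq> (\<lambda>t. u + t) ` Poly_Mapping.keys g"
proof
  fix k assume "k \<in> Poly_Mapping.keys (Poly_Mapping.single u c * g)"
  then obtain a b where "k = a + b" "a \<in> Poly_Mapping.keys (Poly_Mapping.single u c)" "b \<in> Poly_Mapping.keys g"
    using keys_mult by blast
  thus "k \<in> (\<lambda>t. u + t) ` Poly_Mapping.keys g" by (auto split: if_splits)
qed

lemma lt_single_mult:
  fixes g :: "'x pp \<Rightarrow>\<^sub>0 'a::field"
  assumes to: "term_order ord" and c: "c \<noteq> 0" and g: "g \<noteq> 0"
  shows "Poly_Mapping.single u c * g \<noteq> 0 \<and> lt ord (Poly_Mapping.single u c * g) = u + lt ord g"
proof -
  have l: "Poly_Mapping.lookup (Poly_Mapping.single u c * g) (u + lt ord g) \<noteq> 0"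
    using lookup_single_mult[of u c g "lt ord g"] c lc_nonzero[OF to g] by (simp add: lc_def)
  hence k: "u + lt ord g \<in> Poly_Mapping.keys (Poly_Mapping.single u c * g)" by (simp add: in_keys_iff)
  have "\<forall>s\<in>Poly_Mapping.keys (Poly_Mapping.single u c * g). ord s (u + lt ord g)"
  proof
    fix s assume "s \<in> Poly_Mapping.keys (Poly_Mapping.single u c * g)"
    then obtain t where "s = u + t" "t \<in> Poly_Mapping.keys g" using keys_single_mult by blast
    thus "ord s (u + lt ord g)" using lt_max[OF to] to_mono_left[OF to] by blast
  qed
  with k lt_eqI[OF to] show ?thesis by auto
qed

lemma keys_lt_le:
  fixes f :: "'x pp \<Rightarrow>\<^sub>0 'a::field"
  assumes to: "term_order ord" and "f \<noteq> 0" and "g \<noteq> 0" and "lc ord g = 1"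
    and "lt ord f = u + lt ord g"
  shows "\<forall>s\<in>Poly_Mapping.keys (f - Poly_Mapping.single u (lc ord f) * g). ord s (lt ord f)"
    and "Poly_Mapping.lookup (f - Poly_Mapping.single u (lc ord f) * g) (lt ord f) = 0"
proof -
  show "\<forall>s\<in>Poly_Mapping.keys (f - Poly_Mapping.single u (lc ord f) * g). ord s (lt ord f)"
  proof
    fix s assume "s \<in> Poly_Mapping.keys (f - Poly_Mapping.single u (lc ord f) * g)"
    hence "s \<in> Poly_Mapping.keys f \<union> Poly_Mapping.keys (Poly_Mapping.single u (lc ord f) * g)"
      by (rule subsetD[OF keys_diff])
    hence "s \<in> Poly_Mapping.keys f \<or> s \<in> Poly_Mapping.keys (Poly_Mapping.single u (lc ord f) * g)"
      by simp
    thus "ord s (lt ord f)"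
    proof
      assume "s \<in> Poly_Mapping.keys f" thus ?thesis by (rule lt_max[OF to])
    next
      assume "s \<in> Poly_Mapping.keys (Poly_Mapping.single u (lc ord f) * g)"
      then obtain t where st: "s = u + t" "t \<in> Poly_Mapping.keys g" using keys_single_mult by blast
      moreover have "ord (u + t) (u + lt ord g)" using lt_max[OF to st(2)] to_mono_left[OF to] by blast
      ultimately show ?thesis using assms(5) by simp
    qed
  qed
  have e: "Poly_Mapping.lookup (Poly_Mapping.single u (lc ord f) * g) (lt ord f) = lc ord f"
    using lookup_single_mult[of u "lc ord f" g "lt ord g"] assms(4,5) unfolding lc_def[of ord g] by simp
  show "Poly_Mapping.lookup (f - Poly_Mapping.single u (lc ord f) * g) (lt ord f) = 0"
    unfolding lookup_minus e by (simp add: lc_def)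
qed

lemma lt_reduce:
  fixes f :: "'x pp \<Rightarrow>\<^sub>0 'a::field"
  assumes to: "term_order ord" and "f \<noteq> 0" and "g \<noteq> 0" and "lc ord g = 1"
    and "lt ord f = u + lt ord g"
    and nz: "f - Poly_Mapping.single u (lc ord f) * g \<noteq> 0"
  shows "(lt ord (f - Poly_Mapping.single u (lc ord f) * g), lt ord f) \<in> strict ord"
proof -
  let ?f = "f - Poly_Mapping.single u (lc ord f) * g"
  have k: "lt ord ?f \<in> Poly_Mapping.keys ?f" using lt_in_keys[OF to nz] .
  with keys_lt_le[OF assms(1-5)] have "ord (lt ord ?f) (lt ord f)" "lt ord ?f \<noteq> lt ord f"
    by (auto simp: in_keys_iff)
  thus ?thesis by (simp add: strict_def)
qed

section \<open>Ideals\<close>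

lemma ideal_gen_ideal: "is_ideal (ideal_gen G)"
  unfolding ideal_gen_def is_ideal_def by blast

lemma ideal_gen_sub: "G \<subseteq> ideal_gen G"
  unfolding ideal_gen_def by blast

lemma ideal_gen_least: "is_ideal J \<Longrightarrow> G \<subseteq> J \<Longrightarrow> ideal_gen G \<subseteq> J"
  unfolding ideal_gen_def by blast

lemma ideal_add: "is_ideal J \<Longrightarrow> a \<in> J \<Longrightarrow> b \<in> J \<Longrightarrow> a + b \<in> J"
  unfolding is_ideal_def by blast

lemma ideal_mult: "is_ideal J \<Longrightarrow> a \<in> J \<Longrightarrow> r * a \<in> J"
  unfolding is_ideal_def by blast

lemma ideal_zero: "is_ideal J \<Longrightarrow> 0 \<in> J"
  unfolding is_ideal_def by blast

lemma ideal_diff: "is_ideal J \<Longrightarrow> a \<in> J \<Longrightarrow> b \<in> J \<Longrightarrow> a - b \<in> J"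
proof -
  assume J: "is_ideal J" "a \<in> J" "b \<in> J"
  have "(-1) * b \<in> J" using ideal_mult[OF J(1) J(3)] .
  hence "a + (-1) * b \<in> J" using ideal_add[OF J(1) J(2)] by blast
  thus ?thesis by simp
qed

lemma LTs_mult:
  fixes J :: "('x pp \<Rightarrow>\<^sub>0 'a::field) set"
  assumes to: "term_order ord" and J: "is_ideal J" and t: "t \<in> LTs ord J"
  shows "u + t \<in> LTs ord J"
proof -
  obtain f where f: "f \<in> J" "f \<noteq> 0" "t = lt ord f" using t unfolding LTs_def by blast
  have "Poly_Mapping.single u 1 * f \<in> J" using ideal_mult[OF J f(1)] .
  moreover have "Poly_Mapping.single u 1 * f \<noteq> 0 \<and> lt ord (Poly_Mapping.single u 1 * f) = u + t"
    using lt_single_mult[OF to _ f(2), of 1 u] f(3) by simp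
  ultimately show ?thesis unfolding LTs_def by (metis (mono_tags, lifting) mem_Collect_eq)
qed

lemma LTs_dvd:
  fixes J :: "('x pp \<Rightarrow>\<^sub>0 'a::field) set"
  assumes to: "term_order ord" and J: "is_ideal J" and t: "s \<in> LTs ord J" and "pp_dvd s t"
  shows "t \<in> LTs ord J"
  using assms LTs_mult[OF to J t] unfolding pp_dvd_def by (metis add.commute)

section \<open>p-integral rationals\<close>

definition intA :: "nat \<Rightarrow> rat \<Rightarrow> bool" where
  "intA p q \<longleftrightarrow> \<not> int p dvd snd (quotient_of q)"

lemma quot_parts:
  obtains n d where "quotient_of q = (n, d)" "d > 0" "coprime n d" "q = of_int n / of_int d"
  by (metis prod.exhaust quotient_of_coprime quotient_of_denom_pos quotient_of_div)

lemma frac_cross: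
  assumes "d \<noteq> 0" "d' \<noteq> 0" "(of_int n / of_int d :: rat) = of_int n' / of_int d'"
  shows "n * d' = n' * d"
proof -
  have "(of_int n * of_int d' :: rat) = of_int n' * of_int d"
    using assms by (simp add: frac_eq_eq)
  thus ?thesis by (metis of_int_eq_iff of_int_mult)
qed

lemma den_dvd:
  assumes "d \<noteq> 0" "q = of_int n / of_int d"
  shows "snd (quotient_of q) dvd d"
proof -
  obtain n' d' where nd: "quotient_of q = (n', d')" "d' > 0" "coprime n' d'" "q = of_int n' / of_int d'"
    by (rule quot_parts)
  have "n * d' = n' * d" using frac_cross[of d d' n n'] assms nd by simp
  hence "d' dvd n' * d" by (metis dvd_triv_right)
  hence "d' dvd d" using nd(3) by (simp add: coprime_commute coprime_dvd_mult_right_iff)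
  thus ?thesis using nd by simp
qed

lemma intA_frac:
  assumes "d \<noteq> 0" "\<not> int p dvd d" "q = of_int n / of_int d"
  shows "intA p q"
  using den_dvd[OF assms(1,3)] assms(2) unfolding intA_def using dvd_trans by blast

lemma intA_E:
  assumes "intA p q"
  obtains n d where "d \<noteq> 0" "\<not> int p dvd d" "q = of_int n / of_int d"
proof -
  obtain n d where nd: "quotient_of q = (n, d)" "d > 0" "coprime n d" "q = of_int n / of_int d"
    by (rule quot_parts)
  have "\<not> int p dvd d" using assms nd(1) unfolding intA_def by simp
  thus ?thesis using that[of d n] nd by simp
qed

lemma intA_of_int: "p \<noteq> 1 \<Longrightarrow> intA p (of_int k)"
  by (rule intA_frac[of 1]) simp_all

lemma card_ne1: "CARD('p::prime_card) \<noteq> 1"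
  using prime_card[where 'a='p] by auto

lemma intA_add:
  assumes p: "prime p" and a: "intA p a" and b: "intA p b"
  shows "intA p (a + b)"
proof -
  obtain n d where 1: "d \<noteq> 0" "\<not> int p dvd d" "a = of_int n / of_int d" using a by (rule intA_E)
  obtain n' d' where 2: "d' \<noteq> 0" "\<not> int p dvd d'" "b = of_int n' / of_int d'" using b by (rule intA_E)
  have "a + b = of_int (n * d' + n' * d) / of_int (d * d')"
    using 1 2 by (simp add: field_simps)
  moreover have "\<not> int p dvd d * d'" using 1 2 p by (simp add: prime_dvd_mult_iff)
  ultimately show ?thesis using 1 2 by (intro intA_frac[where n="n * d' + n' * d" and d="d * d'"]) auto
qed

lemma intA_mult:
  assumes p: "prime p" and a: "intA p a" and b: "intA p b"
  shows "intA p (a * b)"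
proof -
  obtain n d where 1: "d \<noteq> 0" "\<not> int p dvd d" "a = of_int n / of_int d" using a by (rule intA_E)
  obtain n' d' where 2: "d' \<noteq> 0" "\<not> int p dvd d'" "b = of_int n' / of_int d'" using b by (rule intA_E)
  have "a * b = of_int (n * n') / of_int (d * d')"
    unfolding 1(3) 2(3) by (simp add: times_divide_times_eq)
  moreover have "\<not> int p dvd d * d'" using 1 2 p by (simp add: prime_dvd_mult_iff)
  ultimately show ?thesis using 1 2 by (intro intA_frac[where n="n * n'" and d="d * d'"]) auto
qed

lemma intA_uminus:
  assumes a: "intA p a" shows "intA p (- a)"
proof -
  obtain n d where 1: "d \<noteq> 0" "\<not> int p dvd d" "a = of_int n / of_int d" using a by (rule intA_E)
  have "- a = of_int (- n) / of_int d" using 1 by simp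
  thus ?thesis using 1 by (intro intA_frac[where n="- n" and d=d]) auto
qed

lemma intA_diff:
  assumes p: "prime p" and a: "intA p a" and b: "intA p b"
  shows "intA p (a - b)"
  using intA_add[OF p a intA_uminus[OF b]] by simp

section \<open>Reduction\<close>

lemma of_int_mod_ring_0_iff:
  "(of_int k :: 'p::prime_card mod_ring) = 0 \<longleftrightarrow> int CARD('p) dvd k"
  by (simp add: of_int_eq_0_iff_char_dvd)

lemma red_frac:
  assumes "d \<noteq> 0" "\<not> int CARD('p::prime_card) dvd d" "q = of_int n / of_int d"
  shows "(red_rat q :: 'p mod_ring) = of_int n / of_int d"
proof -
  obtain n' d' where nd: "quotient_of q = (n', d')" "d' > 0" "coprime n' d'" "q = of_int n' / of_int d'"
    by (rule quot_parts)
  have dd: "d' dvd d" using den_dvd[OF assms(1,3)] nd by simp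
  have cross: "n * d' = n' * d" using frac_cross[of d d' n n'] assms nd by simp
  have d0: "(of_int d :: 'p mod_ring) \<noteq> 0" using assms(2) by (simp add: of_int_mod_ring_0_iff)
  have d0': "(of_int d' :: 'p mod_ring) \<noteq> 0" using assms(2) dd dvd_trans
    by (metis of_int_mod_ring_0_iff)
  have "(of_int n * of_int d' :: 'p mod_ring) = of_int n' * of_int d"
    by (metis cross of_int_mult)
  hence "(of_int n' / of_int d' :: 'p mod_ring) = of_int n / of_int d"
    using d0 d0' by (simp add: frac_eq_eq)
  thus ?thesis unfolding red_rat_def nd(1) by simp
qed

lemma red_of_int: "(red_rat (of_int k) :: 'p::prime_card mod_ring) = of_int k"
  using red_frac[where d=1 and n=k and q="of_int k" and 'p='p] card_ne1[where 'p='p] by simp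

lemma red_zero: "(red_rat 0 :: 'p::prime_card mod_ring) = 0"
  using red_of_int[of 0] by simp

lemma red_one: "(red_rat 1 :: 'p::prime_card mod_ring) = 1"
  using red_of_int[of 1] by simp

lemma red_add:
  assumes a: "intA CARD('p::prime_card) a" and b: "intA CARD('p) b"
  shows "(red_rat (a + b) :: 'p mod_ring) = red_rat a + red_rat b"
proof -
  obtain n d where 1: "d \<noteq> 0" "\<not> int CARD('p) dvd d" "a = of_int n / of_int d" using a by (rule intA_E)
  obtain n' d' where 2: "d' \<noteq> 0" "\<not> int CARD('p) dvd d'" "b = of_int n' / of_int d'" using b by (rule intA_E)
  have p: "prime (int CARD('p))" by (rule prime_card_int)
  have s: "a + b = of_int (n * d' + n' * d) / of_int (d * d')"
    using 1 2 by (simp add: field_simps)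
  have dd: "\<not> int CARD('p) dvd d * d'" using 1 2 p by (simp add: prime_dvd_mult_iff)
  have d0: "(of_int d :: 'p mod_ring) \<noteq> 0" "(of_int d' :: 'p mod_ring) \<noteq> 0"
    using 1 2 by (simp_all add: of_int_mod_ring_0_iff)
  have "(red_rat (a + b) :: 'p mod_ring) = of_int (n * d' + n' * d) / of_int (d * d')"
    using 1 2 by (intro red_frac[OF _ dd s]) simp
  also have "\<dots> = of_int n / of_int d + of_int n' / of_int d'"
    by (simp only: add_frac_eq[OF d0] of_int_add of_int_mult)
  also have "\<dots> = red_rat a + red_rat b" using red_frac[OF 1] red_frac[OF 2] by simp
  finally show ?thesis .
qed

lemma red_mult:
  assumes a: "intA CARD('p::prime_card) a" and b: "intA CARD('p) b"
  shows "(red_rat (a * b) :: 'p mod_ring) = red_rat a * red_rat b"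
proof -
  obtain n d where 1: "d \<noteq> 0" "\<not> int CARD('p) dvd d" "a = of_int n / of_int d" using a by (rule intA_E)
  obtain n' d' where 2: "d' \<noteq> 0" "\<not> int CARD('p) dvd d'" "b = of_int n' / of_int d'" using b by (rule intA_E)
  have p: "prime (int CARD('p))" by (rule prime_card_int)
  have s: "a * b = of_int (n * n') / of_int (d * d')"
    unfolding 1(3) 2(3) by (simp add: times_divide_times_eq)
  have dd: "\<not> int CARD('p) dvd d * d'" using 1 2 p by (simp add: prime_dvd_mult_iff)
  have d0: "(of_int d :: 'p mod_ring) \<noteq> 0" "(of_int d' :: 'p mod_ring) \<noteq> 0"
    using 1 2 by (simp_all add: of_int_mod_ring_0_iff)
  have "(red_rat (a * b) :: 'p mod_ring) = of_int (n * n') / of_int (d * d')"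
    using 1 2 by (intro red_frac[OF _ dd s]) simp
  also have "\<dots> = (of_int n / of_int d) * (of_int n' / of_int d')"
    by (simp only: times_divide_times_eq of_int_mult)
  also have "\<dots> = red_rat a * red_rat b" using red_frac[OF 1] red_frac[OF 2] by simp
  finally show ?thesis .
qed

lemma red_uminus:
  assumes a: "intA CARD('p::prime_card) a"
  shows "(red_rat (- a) :: 'p mod_ring) = - red_rat a"
proof -
  have "(red_rat (a + (- a)) :: 'p mod_ring) = red_rat a + red_rat (-a)"
    by (rule red_add[OF a intA_uminus[OF a]])
  hence "red_rat a + red_rat (-a) = (0::'p mod_ring)" using red_zero[where 'p='p] by simp
  thus ?thesis by (simp add: add_eq_0_iff)
qed

lemma red_diff:
  assumes a: "intA CARD('p::prime_card) a" and b: "intA CARD('p) b"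
  shows "(red_rat (a - b) :: 'p mod_ring) = red_rat a - red_rat b"
  using red_add[OF a intA_uminus[OF b]] red_uminus[OF b] by simp

lemma red_zero_div:
  assumes a: "intA CARD('p::prime_card) a" and r: "(red_rat a :: 'p mod_ring) = 0"
  shows "intA CARD('p) (a / of_nat CARD('p))"
proof -
  obtain n d where 1: "d \<noteq> 0" "\<not> int CARD('p) dvd d" "a = of_int n / of_int d" using a by (rule intA_E)
  have "(of_int n / of_int d :: 'p mod_ring) = 0" using r red_frac[OF 1] by simp
  moreover have "(of_int d :: 'p mod_ring) \<noteq> 0" using 1 by (simp add: of_int_mod_ring_0_iff)
  ultimately have "(of_int n :: 'p mod_ring) = 0" by simp
  then obtain m where m: "n = int CARD('p) * m" by (auto simp: of_int_mod_ring_0_iff)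
  have "a / of_nat CARD('p) = of_int m / of_int d" using 1 m by simp
  thus ?thesis using 1 by (intro intA_frac[where n=m and d=d]) auto
qed

lemma red_p_mult:
  assumes a: "intA CARD('p::prime_card) a"
  shows "(red_rat (of_nat CARD('p) * a) :: 'p mod_ring) = 0"
proof -
  have "(red_rat (of_int (int CARD('p)) * a) :: 'p mod_ring) = red_rat (of_int (int CARD('p))) * red_rat a"
    by (rule red_mult[OF intA_of_int[OF card_ne1] a])
  moreover have "(red_rat (of_nat CARD('p)) :: 'p mod_ring) = 0"
    using red_of_int[of "int CARD('p)", where 'p='p] by simp
  ultimately show ?thesis by simp
qed

lemma red_lift: "(red_rat (rat_of_int (to_int_mod_ring b)) :: 'p::prime_card mod_ring) = b"
  by (simp add: red_of_int of_int_of_int_mod_ring)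

lemma int_factor_p:
  fixes d :: int
  assumes "d \<noteq> 0" "prime p"
  shows "\<exists>e d'. d = p ^ e * d' \<and> \<not> p dvd d'"
  using assms(1)
proof (induction "nat \<bar>d\<bar>" arbitrary: d rule: less_induct)
  case less
  show ?case
  proof (cases "p dvd d")
    case False
    thus ?thesis by (intro exI[of _ 0] exI[of _ d]) auto
  next
    case True
    then obtain d1 where d1: "d = p * d1" by blast
    have p2: "p \<ge> 2" using assms(2) prime_ge_2_int by blast
    have "d1 \<noteq> 0" using less.prems d1 by simp
    hence "\<bar>d1\<bar> < \<bar>d\<bar>" using d1 p2 by (simp add: abs_mult)
    hence "nat \<bar>d1\<bar> < nat \<bar>d\<bar>" by simp
    then obtain e d' where "d1 = p ^ e * d'" "\<not> p dvd d'" using less.hyps \<open>d1 \<noteq> 0\<close> by blast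
    thus ?thesis using d1 by (intro exI[of _ "Suc e"] exI[of _ d']) auto
  qed
qed

lemma intA_pow_exists:
  assumes p: "prime p"
  shows "\<exists>e. intA p (of_nat p ^ e * q)"
proof -
  obtain n d where nd: "quotient_of q = (n, d)" "d > 0" "coprime n d" "q = of_int n / of_int d"
    by (rule quot_parts)
  obtain e d' where ed: "d = int p ^ e * d'" "\<not> int p dvd d'"
    using int_factor_p[of d "int p"] nd(2) p by auto
  have "d' \<noteq> 0" using ed nd(2) by auto
  moreover have "(of_nat p ^ e * q) = of_int n / of_int d'"
    using nd ed p \<open>d' \<noteq> 0\<close> by (simp add: field_simps prime_gt_0_nat)
  ultimately show ?thesis using ed by (intro exI[of _ e] intA_frac[where n=n and d=d']) auto
qed

lemma intA_pow_mult:
  assumes p: "prime p" and "intA p x"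
  shows "intA p (of_nat p ^ k * x)"
proof -
  have "intA p (of_int (int p ^ k))" using p by (intro intA_of_int) auto
  hence "intA p (of_nat p ^ k)" by simp
  thus ?thesis using intA_mult[OF p _ assms(2)] by blast
qed

definition polyA :: "nat \<Rightarrow> ('x, rat) mpoly \<Rightarrow> bool" where
  "polyA p f \<longleftrightarrow> (\<forall>t. intA p (Poly_Mapping.lookup f t))"

lemma intA_zero: "p \<noteq> 1 \<Longrightarrow> intA p 0"
  using intA_of_int[of p 0] by simp

lemma lookup_single_mult_other:
  fixes g :: "'x pp \<Rightarrow>\<^sub>0 'a::comm_semiring_1"
  assumes "\<forall>t. k \<noteq> u + t"
  shows "Poly_Mapping.lookup (Poly_Mapping.single u c * g) k = 0"
proof (rule ccontr)
  assume "Poly_Mapping.lookup (Poly_Mapping.single u c * g) k \<noteq> 0"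
  hence "k \<in> Poly_Mapping.keys (Poly_Mapping.single u c * g)" by (simp add: in_keys_iff)
  then obtain t where "k = u + t" using keys_single_mult by blast
  thus False using assms by blast
qed

lemma lookup_red:
  "Poly_Mapping.lookup (red_poly f :: ('x, 'p::prime_card mod_ring) mpoly) t
     = red_rat (Poly_Mapping.lookup f t)"
  unfolding red_poly_def by (simp add: map.rep_eq when_def red_zero)

lemma keys_red: "Poly_Mapping.keys (red_poly f :: ('x, 'p::prime_card mod_ring) mpoly) \<subseteq> Poly_Mapping.keys f"
  by (auto simp: in_keys_iff lookup_red red_zero)

lemma red_poly_zero: "(red_poly 0 :: ('x, 'p::prime_card mod_ring) mpoly) = 0"
  by (rule poly_mapping_eqI) (simp add: lookup_red red_zero)

lemma polyA_zero: "polyA CARD('p::prime_card) 0"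
  unfolding polyA_def using intA_zero[OF card_ne1[where 'p='p]] by simp

lemma polyA_add: "polyA CARD('p::prime_card) f \<Longrightarrow> polyA CARD('p) g \<Longrightarrow> polyA CARD('p) (f + g)"
  unfolding polyA_def by (simp add: lookup_add intA_add prime_card)

lemma polyA_diff: "polyA CARD('p::prime_card) f \<Longrightarrow> polyA CARD('p) g \<Longrightarrow> polyA CARD('p) (f - g)"
  unfolding polyA_def by (simp add: lookup_minus intA_diff prime_card)

lemma red_poly_add:
  assumes "polyA CARD('p::prime_card) f" "polyA CARD('p) g"
  shows "(red_poly (f + g) :: ('x, 'p mod_ring) mpoly) = red_poly f + red_poly g"
  by (rule poly_mapping_eqI)
    (use assms in \<open>simp add: lookup_red lookup_add red_add polyA_def\<close>)

lemma red_poly_diff: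
  assumes "polyA CARD('p::prime_card) f" "polyA CARD('p) g"
  shows "(red_poly (f - g) :: ('x, 'p mod_ring) mpoly) = red_poly f - red_poly g"
  by (rule poly_mapping_eqI)
    (use assms in \<open>simp add: lookup_red lookup_minus red_diff polyA_def\<close>)

lemma polyA_single_mult:
  assumes c: "intA CARD('p::prime_card) c" and g: "polyA CARD('p) g"
  shows "polyA CARD('p) (Poly_Mapping.single u c * g)"
  unfolding polyA_def
proof
  fix k
  show "intA CARD('p) (Poly_Mapping.lookup (Poly_Mapping.single u c * g) k)"
  proof (cases "\<exists>t. k = u + t")
    case True
    then obtain t where "k = u + t" by blast
    thus ?thesis using intA_mult[OF prime_card c] g unfolding polyA_def
      by (simp add: lookup_single_mult)
  next
    case False
    thus ?thesis using lookup_single_mult_other[of k u c g] intA_zero[OF card_ne1[where 'p='p]]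
      by auto
  qed
qed

lemma red_poly_single_mult:
  assumes c: "intA CARD('p::prime_card) c" and g: "polyA CARD('p) g"
  shows "(red_poly (Poly_Mapping.single u c * g) :: ('x, 'p mod_ring) mpoly)
    = Poly_Mapping.single u (red_rat c) * red_poly g"
proof (rule poly_mapping_eqI)
  fix k
  show "Poly_Mapping.lookup (red_poly (Poly_Mapping.single u c * g) :: ('x, 'p mod_ring) mpoly) k =
    Poly_Mapping.lookup (Poly_Mapping.single u (red_rat c) * red_poly g) k"
  proof (cases "\<exists>t. k = u + t")
    case True
    then obtain t where "k = u + t" by blast
    thus ?thesis using red_mult[OF c] g unfolding polyA_def
      by (simp add: lookup_single_mult lookup_red)
  next
    case False
    thus ?thesis using lookup_single_mult_other[of k u c g]
        lookup_single_mult_other[of k u "red_rat c :: 'p mod_ring" "red_poly g"]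
      by (auto simp: lookup_red red_zero)
  qed
qed

lemma intA_den: "intA p c \<longleftrightarrow> \<not> int p dvd den_rat c"
  by (simp add: intA_def den_rat_def)

lemma good_polyA:
  assumes "good G p" "g \<in> G"
  shows "polyA p g"
  unfolding polyA_def
proof
  fix t
  have "den_rat (Poly_Mapping.lookup g t) dvd den_poly g"
    unfolding den_poly_def by (rule dvd_Lcm) simp
  moreover have "den_poly g dvd den_set G"
    unfolding den_set_def by (rule dvd_Lcm) (use assms in simp)
  ultimately show "intA p (Poly_Mapping.lookup g t)"
    using assms(1) unfolding intA_den good_def using dvd_trans by blast
qed

lemma prime_dvd_Lcm_fin:
  fixes S :: "int set"
  assumes "prime q" "finite S" "q dvd Lcm S"
  shows "\<exists>x\<in>S. q dvd x"
  using assms(2,3)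
proof (induction S rule: finite_induct)
  case empty
  hence "q dvd 1" by simp
  thus ?case using assms(1) not_prime_unit by blast
next
  case (insert a S)
  hence "q dvd lcm a (Lcm S)" by simp
  moreover have "lcm a (Lcm S) dvd a * Lcm S" by (rule lcm_least) (rule dvd_triv_left, rule dvd_triv_right)
  ultimately have "q dvd a * Lcm S" using dvd_trans by blast
  hence "q dvd a \<or> q dvd Lcm S" using assms(1) by (simp add: prime_dvd_mult_iff)
  thus ?case using insert by blast
qed

lemma bad_exists:
  assumes "prime p" "finite G" "\<not> good G p"
  shows "\<exists>g\<in>G. \<not> polyA p g"
proof -
  have "int p dvd Lcm (den_poly ` G)" using assms(3) by (simp add: good_def den_set_def)
  then obtain g where g: "g \<in> G" "int p dvd den_poly g"
    using prime_dvd_Lcm_fin[of "int p" "den_poly ` G"] assms(1,2) by auto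
  have "range (Poly_Mapping.lookup g) \<subseteq> insert 0 (Poly_Mapping.lookup g ` Poly_Mapping.keys g)"
    by (auto simp: in_keys_iff)
  hence fin: "finite (range (Poly_Mapping.lookup g))" by (rule finite_subset) simp
  obtain t where "int p dvd den_rat (Poly_Mapping.lookup g t)"
    using prime_dvd_Lcm_fin[of "int p" "den_rat ` range (Poly_Mapping.lookup g)"] g(2) fin assms(1)
    unfolding den_poly_def by auto
  hence "\<not> polyA p g" unfolding polyA_def intA_den by blast
  thus ?thesis using g by blast
qed

abbreviation redp :: "('x, rat) mpoly \<Rightarrow> ('x, 'p::prime_card mod_ring) mpoly" where
  "redp \<equiv> red_poly"

lemma GB_div:
  assumes "is_reduced_GB ord I G" "f \<in> I" "f \<noteq> 0"
  shows "\<exists>g\<in>G. g \<noteq> 0 \<and> lc ord g = 1 \<and> g \<in> I \<and> (\<exists>u. lt ord f = u + lt ord g)"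
proof -
  from assms obtain g where g: "g \<in> G" "g \<noteq> 0" "pp_dvd (lt ord g) (lt ord f)"
    unfolding is_reduced_GB_def is_GB_def by blast
  moreover have "lc ord g = 1" "g \<in> I" using assms(1) g(1) unfolding is_reduced_GB_def is_GB_def by auto
  ultimately show ?thesis unfolding pp_dvd_def by (metis add.commute)
qed

lemma red_in_Ip:
  fixes \<sigma> :: "('x::finite) pp \<Rightarrow> 'x pp \<Rightarrow> bool" and I G :: "('x, rat) mpoly set"
  assumes to: "term_order \<sigma>" and I: "is_ideal I" and GB: "is_reduced_GB \<sigma> I G"
    and good: "\<forall>g\<in>G. polyA CARD('p::prime_card) g"
    and f: "f \<in> I" "polyA CARD('p) f"
  shows "(redp f :: ('x, 'p mod_ring) mpoly) \<in> ideal_gen (redp ` G)"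
proof -
  let ?Ip = "ideal_gen (redp ` G) :: ('x, 'p mod_ring) mpoly set"
  have Ip: "is_ideal ?Ip" by (rule ideal_gen_ideal)
  have main: "\<forall>f. f \<in> I \<longrightarrow> polyA CARD('p) f \<longrightarrow> f \<noteq> 0 \<longrightarrow> lt \<sigma> f = t \<longrightarrow> redp f \<in> ?Ip" for t
  proof (induction t rule: wf_induct[OF wf_strict[OF to]])
    case (1 t)
    show ?case
    proof (intro allI impI)
      fix f assume f: "f \<in> I" "polyA CARD('p) f" "f \<noteq> 0" "lt \<sigma> f = t"
      obtain g u where g: "g \<in> G" "g \<noteq> 0" "lc \<sigma> g = 1" "g \<in> I" "lt \<sigma> f = u + lt \<sigma> g"
        using GB_div[OF GB f(1,3)] by blast
      let ?c = "lc \<sigma> f"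
      let ?f = "f - Poly_Mapping.single u ?c * g"
      have c: "intA CARD('p) ?c" using f(2) unfolding polyA_def lc_def by blast
      have pg: "polyA CARD('p) g" using good g(1) by blast
      have f'I: "?f \<in> I" using ideal_diff[OF I f(1) ideal_mult[OF I g(4)]] .
      have f'A: "polyA CARD('p) ?f" by (rule polyA_diff[OF f(2) polyA_single_mult[OF c pg]])
      have "(redp ?f :: ('x, 'p mod_ring) mpoly) = redp f - Poly_Mapping.single u (red_rat ?c) * redp g"
        using red_poly_diff[OF f(2) polyA_single_mult[OF c pg]]
          red_poly_single_mult[OF c pg] by simp
      hence eq: "(redp f :: ('x, 'p mod_ring) mpoly) = redp ?f + Poly_Mapping.single u (red_rat ?c) * redp g" by simp
      have r1: "(redp ?f :: ('x, 'p mod_ring) mpoly) \<in> ?Ip"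
      proof (cases "?f = 0")
        case True thus ?thesis using ideal_zero[OF Ip] by (simp add: red_poly_zero)
      next
        case False
        have "(lt \<sigma> ?f, t) \<in> strict \<sigma>" using lt_reduce[OF to f(3) g(2) g(3) g(5) False] f(4) by simp
        thus ?thesis using 1 f'I f'A False by blast
      qed
      have "(redp g :: ('x, 'p mod_ring) mpoly) \<in> ?Ip" using ideal_gen_sub g(1) by blast
      hence r2: "Poly_Mapping.single u (red_rat ?c) * (redp g :: ('x, 'p mod_ring) mpoly) \<in> ?Ip"
        by (rule ideal_mult[OF Ip])
      show "redp f \<in> ?Ip" unfolding eq by (rule ideal_add[OF Ip r1 r2])
    qed
  qed
  show ?thesis
  proof (cases "f = 0")
    case True thus ?thesis using ideal_zero[OF Ip] by (simp add: red_poly_zero)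
  next
    case False thus ?thesis using main f by blast
  qed
qed

lemma update_single: "k \<notin> Poly_Mapping.keys f \<Longrightarrow> Poly_Mapping.update k b f = Poly_Mapping.single k b + f"
  by (rule poly_mapping_eqI) (auto simp: lookup_update lookup_add lookup_single when_def in_keys_iff)

lemma Ip_sub:
  fixes \<sigma> :: "('x::finite) pp \<Rightarrow> 'x pp \<Rightarrow> bool" and I G :: "('x, rat) mpoly set"
  assumes to: "term_order \<sigma>" and I: "is_ideal I" and GB: "is_reduced_GB \<sigma> I G"
    and good: "\<forall>g\<in>G. polyA CARD('p::prime_card) g"
  shows "(ideal_gen (redp ` G) :: ('x, 'p mod_ring) mpoly set) \<subseteq> redp ` {f \<in> I. polyA CARD('p) f}"
proof -
  let ?R = "(redp ` {f \<in> I. polyA CARD('p) f}) :: ('x, 'p mod_ring) mpoly set"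
  have mult: "r * redp a \<in> ?R" if a: "a \<in> I" "polyA CARD('p) a" for a and r :: "('x, 'p mod_ring) mpoly"
  proof (induction r rule: update_induct)
    case const
    have "(0::('x, 'p mod_ring) mpoly) = redp 0" by (simp add: red_poly_zero)
    thus ?case using ideal_zero[OF I] polyA_zero by auto
  next
    case (update f k b)
    then obtain y where y: "y \<in> I" "polyA CARD('p) y" "f * redp a = redp y" by blast
    let ?c = "rat_of_int (to_int_mod_ring b)"
    have c: "intA CARD('p) ?c" by (rule intA_of_int[OF card_ne1])
    have "Poly_Mapping.update k b f * redp a = Poly_Mapping.single k b * redp a + f * redp a"
      using update_single[OF update(1)] by (simp add: distrib_right)
    also have "Poly_Mapping.single k b * redp a = redp (Poly_Mapping.single k ?c * a)"
      by (simp add: red_poly_single_mult[OF c a(2)] red_lift)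
    finally have "Poly_Mapping.update k b f * redp a = redp (Poly_Mapping.single k ?c * a + y)"
      using y(3) by (simp add: red_poly_add[OF polyA_single_mult[OF c a(2)] y(2)])
    moreover have "Poly_Mapping.single k ?c * a + y \<in> I"
      using ideal_add[OF I ideal_mult[OF I a(1)] y(1)] .
    moreover have "polyA CARD('p) (Poly_Mapping.single k ?c * a + y)"
      using polyA_add[OF polyA_single_mult[OF c a(2)] y(2)] .
    ultimately show ?case by blast
  qed
  have "is_ideal ?R"
    unfolding is_ideal_def
  proof (intro conjI ballI allI)
    have "(0::('x, 'p mod_ring) mpoly) = redp 0" by (simp add: red_poly_zero)
    thus "0 \<in> ?R" using ideal_zero[OF I] polyA_zero by auto
  next
    fix x y assume "x \<in> ?R" "y \<in> ?R"
    then obtain a b where ab: "a \<in> I" "polyA CARD('p) a" "x = redp a" "b \<in> I" "polyA CARD('p) b" "y = redp b"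
      by blast
    hence "x + y = redp (a + b)" by (simp add: red_poly_add)
    moreover have "a + b \<in> I" using ideal_add[OF I] ab by blast
    moreover have "polyA CARD('p) (a + b)" using polyA_add ab by blast
    ultimately show "x + y \<in> ?R" by blast
  next
    fix x r assume "x \<in> ?R"
    then obtain a where "a \<in> I" "polyA CARD('p) a" "x = redp a" by blast
    thus "r * x \<in> ?R" using mult by blast
  qed
  moreover have "redp ` G \<subseteq> ?R"
    using GB good unfolding is_reduced_GB_def is_GB_def by blast
  ultimately show ?thesis by (rule ideal_gen_least)
qed

lemma lt_red_monic:
  assumes to: "term_order ord" and g: "polyA CARD('p::prime_card) g" "g \<noteq> 0" "lc ord g = 1"
  shows "(redp g :: ('x, 'p mod_ring) mpoly) \<noteq> 0 \<and> lt ord (redp g :: ('x, 'p mod_ring) mpoly) = lt ord g"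
proof -
  have l: "Poly_Mapping.lookup (redp g :: ('x, 'p mod_ring) mpoly) (lt ord g) = 1"
    using g(3) by (simp add: lookup_red lc_def red_one)
  hence k: "lt ord g \<in> Poly_Mapping.keys (redp g :: ('x, 'p mod_ring) mpoly)" by (simp add: in_keys_iff)
  hence "(redp g :: ('x, 'p mod_ring) mpoly) \<noteq> 0" by auto
  moreover have "\<forall>s\<in>Poly_Mapping.keys (redp g :: ('x, 'p mod_ring) mpoly). ord s (lt ord g)"
    using keys_red lt_max[OF to] by blast
  ultimately show ?thesis using lt_eqI[OF to k] by blast
qed

lemma lift_lt:
  fixes \<tau> :: "('x::finite) pp \<Rightarrow> 'x pp \<Rightarrow> bool" and I G :: "('x, rat) mpoly set"
    and h :: "('x, 'p::prime_card mod_ring) mpoly"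
  assumes to: "term_order \<tau>" and I: "is_ideal I" and GB: "is_reduced_GB \<tau> I G"
    and good: "\<forall>g\<in>G. polyA CARD('p) g" and h: "h \<noteq> 0"
    and f: "f \<in> I" "polyA CARD('p) f" "redp f = h"
  shows "lt \<tau> h \<in> LTs \<tau> I"
proof -
  have main: "\<forall>f. f \<in> I \<longrightarrow> polyA CARD('p) f \<longrightarrow> redp f = h \<longrightarrow> lt \<tau> f = t \<longrightarrow> lt \<tau> h \<in> LTs \<tau> I" for t
  proof (induction t rule: wf_induct[OF wf_strict[OF to]])
    case (1 t)
    show ?case
    proof (intro allI impI)
      fix f assume f: "f \<in> I" "polyA CARD('p) f" "redp f = h" "lt \<tau> f = t"
      have f0: "f \<noteq> 0" using f(3) h by (auto simp: red_poly_zero)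
      have hk: "lt \<tau> h \<in> Poly_Mapping.keys f" using lt_in_keys[OF to h] keys_red f(3) by blast
      hence le: "\<tau> (lt \<tau> h) (lt \<tau> f)" by (rule lt_max[OF to])
      show "lt \<tau> h \<in> LTs \<tau> I"
      proof (cases "lt \<tau> f = lt \<tau> h")
        case True
        thus ?thesis using f f0 unfolding LTs_def by (metis (mono_tags, lifting) mem_Collect_eq)
      next
        case False
        let ?c = "lc \<tau> f"
        have rc: "(red_rat ?c :: 'p mod_ring) = 0"
        proof (rule ccontr)
          assume "(red_rat ?c :: 'p mod_ring) \<noteq> 0"
          hence "lt \<tau> f \<in> Poly_Mapping.keys h" using f(3) by (auto simp: in_keys_iff lookup_red lc_def)
          hence "\<tau> (lt \<tau> f) (lt \<tau> h)" by (rule lt_max[OF to])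
          thus False using le False to_antisym[OF to] by blast
        qed
        obtain g u where g: "g \<in> G" "g \<noteq> 0" "lc \<tau> g = 1" "g \<in> I" "lt \<tau> f = u + lt \<tau> g"
          using GB_div[OF GB f(1) f0] by blast
        let ?f = "f - Poly_Mapping.single u ?c * g"
        have c: "intA CARD('p) ?c" using f(2) unfolding polyA_def lc_def by blast
        have pg: "polyA CARD('p) g" using good g(1) by blast
        have f'I: "?f \<in> I" using ideal_diff[OF I f(1) ideal_mult[OF I g(4)]] .
        have f'A: "polyA CARD('p) ?f" by (rule polyA_diff[OF f(2) polyA_single_mult[OF c pg]])
        have "(redp ?f :: ('x, 'p mod_ring) mpoly) = redp f - Poly_Mapping.single u (red_rat ?c) * redp g"
          by (simp add: red_poly_diff[OF f(2) polyA_single_mult[OF c pg]] red_poly_single_mult[OF c pg])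
        hence rf: "(redp ?f :: ('x, 'p mod_ring) mpoly) = h" using rc f(3) by simp
        hence nz: "?f \<noteq> 0" using h by (auto simp: red_poly_zero)
        have "(lt \<tau> ?f, t) \<in> strict \<tau>" using lt_reduce[OF to f0 g(2) g(3) g(5) nz] f(4) by simp
        thus ?thesis using 1 f'I f'A rf by blast
      qed
    qed
  qed
  thus ?thesis using f by blast
qed

lemma LTs_eq_good:
  fixes \<sigma> \<tau> :: "('x::finite) pp \<Rightarrow> 'x pp \<Rightarrow> bool" and I G\<sigma> G\<tau> :: "('x, rat) mpoly set"
  assumes "term_order \<sigma>" and to: "term_order \<tau>" and I: "is_ideal I"
    and GBs: "is_reduced_GB \<sigma> I G\<sigma>" and GBt: "is_reduced_GB \<tau> I G\<tau>"
    and gs: "good G\<sigma> CARD('p::prime_card)" and gt: "good G\<tau> CARD('p)"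
  shows "LTs \<tau> (ideal_gen (redp ` G\<sigma>) :: ('x, 'p mod_ring) mpoly set) = LTs \<tau> I"
proof
  let ?Ip = "ideal_gen (redp ` G\<sigma>) :: ('x, 'p mod_ring) mpoly set"
  have gs': "\<forall>g\<in>G\<sigma>. polyA CARD('p) g" using gs good_polyA by blast
  have gt': "\<forall>g\<in>G\<tau>. polyA CARD('p) g" using gt good_polyA by blast
  show "LTs \<tau> ?Ip \<subseteq> LTs \<tau> I"
  proof
    fix t assume "t \<in> LTs \<tau> ?Ip"
    then obtain h where h: "h \<in> ?Ip" "h \<noteq> 0" "t = lt \<tau> h" unfolding LTs_def by blast
    then obtain f where "f \<in> I" "polyA CARD('p) f" "redp f = h"
      using Ip_sub[OF assms(1) I GBs gs'] by blast
    thus "t \<in> LTs \<tau> I" using lift_lt[OF to I GBt gt' h(2)] h(3) by blast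
  qed
  show "LTs \<tau> I \<subseteq> LTs \<tau> ?Ip"
  proof
    fix t assume "t \<in> LTs \<tau> I"
    then obtain f where f: "f \<in> I" "f \<noteq> 0" "t = lt \<tau> f" unfolding LTs_def by blast
    obtain g u where g: "g \<in> G\<tau>" "g \<noteq> 0" "lc \<tau> g = 1" "g \<in> I" "lt \<tau> f = u + lt \<tau> g"
      using GB_div[OF GBt f(1,2)] by blast
    have pg: "polyA CARD('p) g" using gt' g(1) by blast
    have rg: "(redp g :: ('x, 'p mod_ring) mpoly) \<in> ?Ip"
      by (rule red_in_Ip[OF assms(1) I GBs gs' g(4) pg])
    have m: "(redp g :: ('x, 'p mod_ring) mpoly) \<noteq> 0 \<and> lt \<tau> (redp g :: ('x, 'p mod_ring) mpoly) = lt \<tau> g"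
      by (rule lt_red_monic[OF to pg g(2,3)])
    hence "lt \<tau> g \<in> LTs \<tau> ?Ip" using rg unfolding LTs_def by (metis (mono_tags, lifting) mem_Collect_eq)
    moreover have "pp_dvd (lt \<tau> g) t" using f(3) g(5) unfolding pp_dvd_def by (metis add.commute)
    ultimately show "t \<in> LTs \<tau> ?Ip" using LTs_dvd[OF to ideal_gen_ideal] by blast
  qed
qed

lemma sorted_unique:
  assumes irr: "\<forall>a. \<not> R a a" and asy: "\<forall>a b. R a b \<longrightarrow> \<not> R b a"
  shows "sorted_wrt R xs \<Longrightarrow> sorted_wrt R ys \<Longrightarrow> set xs = set ys \<Longrightarrow> xs = ys"
proof (induction xs arbitrary: ys)
  case Nil thus ?case by simp
next
  case (Cons x xs)
  then obtain y ys' where ys: "ys = y # ys'" by (cases ys) auto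
  have "x = y"
  proof (rule ccontr)
    assume ne: "x \<noteq> y"
    have "x \<in> set ys'" using Cons.prems(3) ys ne by auto
    hence "R y x" using Cons.prems(2) ys by simp
    moreover have "y \<in> set xs" using Cons.prems(3) ys ne by auto
    hence "R x y" using Cons.prems(1) by simp
    ultimately show False using asy by blast
  qed
  moreover have "x \<notin> set xs" using Cons.prems(1) irr by auto
  moreover have "y \<notin> set ys'" using Cons.prems(2) ys irr by auto
  ultimately have "set xs = set ys'" using Cons.prems(3) ys by auto
  hence "xs = ys'" using Cons.IH Cons.prems ys by simp
  thus ?case using ys \<open>x = y\<close> by simp
qed

lemma sorted_exists:
  assumes tot: "\<forall>a b. a \<noteq> b \<longrightarrow> R a b \<or> R b a" and tr: "\<forall>a b c. R a b \<longrightarrow> R b c \<longrightarrow> R a c"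
  shows "finite S \<Longrightarrow> \<exists>xs. set xs = S \<and> sorted_wrt R xs"
proof (induction "card S" arbitrary: S)
  case 0
  thus ?case by (intro exI[of _ "[]"]) simp
next
  case (Suc n)
  hence ne: "S \<noteq> {}" by auto
  have tot': "\<forall>a b. (\<lambda>a b. a = b \<or> R a b) a b \<or> (\<lambda>a b. a = b \<or> R a b) b a" using tot by blast
  have tr': "\<forall>a b c. (\<lambda>a b. a = b \<or> R a b) a b \<longrightarrow> (\<lambda>a b. a = b \<or> R a b) b c \<longrightarrow> (\<lambda>a b. a = b \<or> R a b) a c"
    using tr by blast
  obtain m where m: "m \<in> S" "\<forall>b\<in>S. m = b \<or> R b m"
    using ex_min_fun[OF _ _ Suc.prems ne, where R="\<lambda>a b. b = a \<or> R b a" and F=id] tot tr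
    by (smt (verit) id_apply)
  have "card (S - {m}) = n" using Suc m by simp
  then obtain xs where xs: "set xs = S - {m}" "sorted_wrt R xs" using Suc by blast
  have "set (xs @ [m]) = S" using xs m by auto
  moreover have "sorted_wrt R (xs @ [m])" using xs m by (auto simp: sorted_wrt_append)
  ultimately show ?case by blast
qed

lemma first_diff:
  assumes tot: "\<forall>a b. a \<noteq> b \<longrightarrow> R a b \<or> R b a" and tr: "\<forall>a b c. R a b \<longrightarrow> R b c \<longrightarrow> R a c"
    and asy: "\<forall>a b. R a b \<longrightarrow> \<not> R b a"
  shows "sorted_wrt R xs \<Longrightarrow> sorted_wrt R ys \<Longrightarrow> m \<in> set ys \<Longrightarrow> m \<notin> set xs \<Longrightarrow>
    \<forall>u. R u m \<longrightarrow> (u \<in> set xs \<longleftrightarrow> u \<in> set ys) \<Longrightarrow> \<exists>t\<in>set xs. R m t \<Longrightarrow>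
    \<exists>k < min (length xs) (length ys). take k ys = take k xs \<and> ys ! k = m \<and> R m (xs ! k)"
proof (induction xs arbitrary: ys)
  case Nil thus ?case by simp
next
  case (Cons x xs)
  then obtain y ys' where ys: "ys = y # ys'" by (cases ys) auto
  have irr: "\<not> R a a" for a using asy by blast
  show ?case
  proof (cases "R y m")
    case True
    have yx: "y \<in> set (x # xs)" using Cons.prems(5) True ys by auto
    have "x = y"
    proof (rule ccontr)
      assume ne: "x \<noteq> y"
      hence "y \<in> set xs" using yx by simp
      hence xy: "R x y" using Cons.prems(1) by simp
      have "x \<noteq> m" using Cons.prems(4) by auto
      show False
      proof (cases "R x m")
        case True
        hence "x \<in> set ys" using Cons.prems(5) by auto
        hence "x \<in> set ys'" using ys ne by simp
        hence "R y x" using Cons.prems(2) ys by simp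
        thus False using xy asy by blast
      next
        case False
        hence "R m x" using tot \<open>x \<noteq> m\<close> by blast
        moreover have "R x m" using tr xy \<open>R y m\<close> by blast
        ultimately show False using asy by blast
      qed
    qed
    have "m \<noteq> y" using True irr by blast
    hence m_ys': "m \<in> set ys'" using Cons.prems(3) ys by simp
    have xn: "x \<notin> set xs" using Cons.prems(1) irr by auto
    have yn: "y \<notin> set ys'" using Cons.prems(2) ys irr by auto
    have cond: "\<forall>u. R u m \<longrightarrow> (u \<in> set xs \<longleftrightarrow> u \<in> set ys')"
      using Cons.prems(5) ys \<open>x = y\<close> xn yn by auto
    obtain t where t: "t \<in> set (x # xs)" "R m t" using Cons.prems(6) by blast
    have "t \<noteq> x" using t(2) True \<open>x = y\<close> asy by blast
    hence "\<exists>t\<in>set xs. R m t" using t by auto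
    then obtain k where k: "k < min (length xs) (length ys')" "take k ys' = take k xs" "ys' ! k = m"
        "R m (xs ! k)"
      using Cons.IH[of ys'] Cons.prems(1,2,4) ys m_ys' cond by auto
    show ?thesis using k ys \<open>x = y\<close> by (intro exI[of _ "Suc k"]) auto
  next
    case False
    have "y = m"
    proof (rule ccontr)
      assume "y \<noteq> m"
      hence "m \<in> set ys'" using Cons.prems(3) ys by simp
      hence "R y m" using Cons.prems(2) ys by simp
      thus False using False by blast
    qed
    have "x \<noteq> m" using Cons.prems(4) by auto
    have "\<not> R x m"
    proof
      assume "R x m"
      hence "x \<in> set ys" using Cons.prems(5) by auto
      hence "x = y \<or> R y x" using Cons.prems(2) ys by auto
      thus False using \<open>x \<noteq> m\<close> \<open>y = m\<close> \<open>R x m\<close> asy by blast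
    qed
    hence "R m x" using tot \<open>x \<noteq> m\<close> by blast
    thus ?thesis using ys \<open>y = m\<close> by (intro exI[of _ 0]) auto
  qed
qed

lemma min_gens_finite: "finite (min_gens ord (J :: (('x::finite) pp \<Rightarrow>\<^sub>0 'a::zero) set))"
  by (rule antichain_finite) (auto simp: min_gens_def)

lemma O_tuple_prop:
  assumes to: "term_order ord"
  shows "set (O_tuple ord (J :: (('x::finite) pp \<Rightarrow>\<^sub>0 'a::zero) set)) = min_gens ord J
    \<and> sorted_wrt (\<lambda>s t. ord s t \<and> s \<noteq> t) (O_tuple ord J)"
proof -
  let ?R = "\<lambda>s t. ord s t \<and> s \<noteq> t"
  have tot: "\<forall>a b. a \<noteq> b \<longrightarrow> ?R a b \<or> ?R b a" using to_total[OF to] by blast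
  have tr: "\<forall>a b c. ?R a b \<longrightarrow> ?R b c \<longrightarrow> ?R a c" using to_trans[OF to] to_antisym[OF to] by blast
  have irr: "\<forall>a. \<not> ?R a a" by blast
  have asy: "\<forall>a b. ?R a b \<longrightarrow> \<not> ?R b a" using to_antisym[OF to] by blast
  from sorted_exists[OF tot tr min_gens_finite[of ord J]]
  obtain xs where xs: "set xs = min_gens ord J" "sorted_wrt ?R xs" by (elim exE conjE)
  have "\<exists>!xs. set xs = min_gens ord J \<and> sorted_wrt ?R xs"
  proof (rule ex1I[where a=xs])
    show "set xs = min_gens ord J \<and> sorted_wrt ?R xs" using xs by (rule conjI)
  next
    fix ys assume "set ys = min_gens ord J \<and> sorted_wrt ?R ys"
    thus "ys = xs" using sorted_unique[OF irr asy, of ys xs] xs by simp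
  qed
  thus ?thesis unfolding O_tuple_def by (rule theI')
qed

lemma part_b:
  fixes \<sigma> \<tau> :: "('x::finite) pp \<Rightarrow> 'x pp \<Rightarrow> bool" and I G\<sigma> G\<tau> :: "('x, rat) mpoly set"
  assumes ts: "term_order \<sigma>" and to: "term_order \<tau>" and I: "is_ideal I"
    and GBs: "is_reduced_GB \<sigma> I G\<sigma>" and GBt: "is_reduced_GB \<tau> I G\<tau>"
    and gs: "good G\<sigma> CARD('p::prime_card)" and bad: "\<not> good G\<tau> CARD('p)"
  shows "tuple_less \<tau> (O_tuple \<tau> (ideal_gen (redp ` G\<sigma>) :: ('x, 'p mod_ring) mpoly set)) (O_tuple \<tau> I)
     \<and> \<not> proper_prefix_of (O_tuple \<tau> I) (O_tuple \<tau> (ideal_gen (redp ` G\<sigma>) :: ('x, 'p mod_ring) mpoly set))"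
proof -
  let ?Ip = "ideal_gen (redp ` G\<sigma>) :: ('x, 'p mod_ring) mpoly set"
  let ?L = "LTs \<tau> I" and ?L' = "LTs \<tau> ?Ip"
  let ?R = "\<lambda>s t. \<tau> s t \<and> s \<noteq> t"
  let ?P = "CARD('p)"
  have Ipi: "is_ideal ?Ip" by (rule ideal_gen_ideal)
  have gs': "\<forall>g\<in>G\<sigma>. polyA ?P g" using gs good_polyA by blast
  have finGt: "finite G\<tau>" using GBt unfolding is_reduced_GB_def is_GB_def by blast
  have GtI: "G\<tau> \<subseteq> I" using GBt unfolding is_reduced_GB_def is_GB_def by blast
  have red: "\<forall>g\<in>G\<tau>. \<forall>g'\<in>G\<tau>. g \<noteq> g' \<longrightarrow> (\<forall>t\<in>Poly_Mapping.keys g. \<not> pp_dvd (lt \<tau> g') t)"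
    using GBt unfolding is_reduced_GB_def by blast
  let ?B = "{g\<in>G\<tau>. \<not> polyA ?P g}"
  have Bne: "?B \<noteq> {}" using bad_exists[OF prime_card[where 'a='p] finGt bad] by blast
  have finB: "finite ?B" using finGt by simp
  have tot0: "\<forall>a b. \<tau> a b \<or> \<tau> b a" using to_total[OF to] by blast
  have tr0: "\<forall>a b c. \<tau> a b \<longrightarrow> \<tau> b c \<longrightarrow> \<tau> a c" using to_trans[OF to] by blast
  obtain gb where gb: "gb \<in> ?B" "\<forall>g\<in>?B. \<tau> (lt \<tau> gb) (lt \<tau> g)"
    using ex_min_fun[OF tot0 tr0 finB Bne, of "lt \<tau>"] by blast
  have gbG: "gb \<in> G\<tau>" and gbA: "\<not> polyA ?P gb" using gb by auto
  have gb0: "gb \<noteq> 0" using GBt gbG unfolding is_reduced_GB_def by blast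
  have gb1: "lc \<tau> gb = 1" using GBt gbG unfolding is_reduced_GB_def by blast
  have gbI: "gb \<in> I" using GtI gbG by blast
  let ?tb = "lt \<tau> gb"
  have small: "u \<in> ?L'" if u: "(u, ?tb) \<in> strict \<tau>" "u \<in> ?L" for u
  proof -
    obtain f where f: "f \<in> I" "f \<noteq> 0" "u = lt \<tau> f" using u(2) unfolding LTs_def by blast
    obtain g w where g: "g \<in> G\<tau>" "g \<noteq> 0" "lc \<tau> g = 1" "g \<in> I" "lt \<tau> f = w + lt \<tau> g"
      using GB_div[OF GBt f(1,2)] by blast
    have dv: "pp_dvd (lt \<tau> g) u" using f(3) g(5) unfolding pp_dvd_def by (metis add.commute)
    have pg: "polyA ?P g"
    proof (rule ccontr)
      assume "\<not> polyA ?P g"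
      hence "\<tau> ?tb (lt \<tau> g)" using gb(2) g(1) by blast
      hence "\<tau> ?tb u" using to_dvd[OF to dv] to_trans[OF to] by blast
      thus False using u(1) to_antisym[OF to] unfolding strict_def by blast
    qed
    have rg: "(redp g :: ('x, 'p mod_ring) mpoly) \<in> ?Ip"
      by (rule red_in_Ip[OF ts I GBs gs' g(4) pg])
    have m: "(redp g :: ('x, 'p mod_ring) mpoly) \<noteq> 0 \<and> lt \<tau> (redp g :: ('x, 'p mod_ring) mpoly) = lt \<tau> g"
      by (rule lt_red_monic[OF to pg g(2,3)])
    hence "lt \<tau> g \<in> ?L'" using rg unfolding LTs_def by (metis (mono_tags, lifting) mem_Collect_eq)
    thus ?thesis using LTs_dvd[OF to Ipi _ dv] by blast
  qed
  let ?E = "{e::nat. \<forall>t. intA ?P (of_nat ?P ^ e * Poly_Mapping.lookup gb t)}"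
  have ex_fin: "\<exists>e. \<forall>t\<in>K. intA ?P (of_nat ?P ^ e * Poly_Mapping.lookup gb t)" if "finite K" for K
    using that
  proof (induction K rule: finite_induct)
    case empty thus ?case by simp
  next
    case (insert t0 K)
    obtain e where e: "\<forall>t\<in>K. intA ?P (of_nat ?P ^ e * Poly_Mapping.lookup gb t)" using insert by blast
    obtain e' where e': "intA ?P (of_nat ?P ^ e' * Poly_Mapping.lookup gb t0)"
      using intA_pow_exists[OF prime_card[where 'a='p]] by blast
    have "\<forall>t\<in>insert t0 K. intA ?P (of_nat ?P ^ (e + e') * Poly_Mapping.lookup gb t)"
    proof
      fix t assume "t \<in> insert t0 K"
      thus "intA ?P (of_nat ?P ^ (e + e') * Poly_Mapping.lookup gb t)"
      proof
        assume "t = t0"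
        thus ?thesis using intA_pow_mult[OF prime_card[where 'a='p] e', of e] by (simp add: power_add mult.assoc mult.commute mult.left_commute)
      next
        assume "t \<in> K"
        thus ?thesis using intA_pow_mult[OF prime_card[where 'a='p], of "of_nat ?P ^ e * Poly_Mapping.lookup gb t" e'] e
          by (simp add: power_add mult.assoc mult.commute mult.left_commute)
      qed
    qed
    thus ?case by blast
  qed
  obtain e1 where e1: "\<forall>t\<in>Poly_Mapping.keys gb. intA ?P (of_nat ?P ^ e1 * Poly_Mapping.lookup gb t)"
    using ex_fin[OF finite_keys] by blast
  have "e1 \<in> ?E"
  proof (intro CollectI allI)
    fix t show "intA ?P (of_nat ?P ^ e1 * Poly_Mapping.lookup gb t)"
    proof (cases "t \<in> Poly_Mapping.keys gb")
      case True thus ?thesis using e1 by blast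
    next
      case False thus ?thesis using intA_zero[OF card_ne1[where 'p='p]] by (simp add: in_keys_iff)
    qed
  qed
  define e0 where "e0 = (LEAST e. e \<in> ?E)"
  have e0E: "e0 \<in> ?E" unfolding e0_def using \<open>e1 \<in> ?E\<close> by (rule LeastI)
  have "0 \<notin> ?E" using gbA unfolding polyA_def by simp
  hence e0pos: "e0 \<noteq> 0" using e0E by (metis (no_types, lifting))
  have "e0 - 1 \<notin> ?E" unfolding e0_def
    by (rule not_less_Least) (use e0pos e0_def in simp)
  then obtain t0 where t0: "\<not> intA ?P (of_nat ?P ^ (e0 - 1) * Poly_Mapping.lookup gb t0)" by blast
  define f0 where "f0 = Poly_Mapping.single 0 (of_nat ?P ^ e0 :: rat) * gb"
  have lf0: "Poly_Mapping.lookup f0 t = of_nat ?P ^ e0 * Poly_Mapping.lookup gb t" for t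
    unfolding f0_def using lookup_single_mult[of 0 "of_nat ?P ^ e0 :: rat" gb t] by simp
  have f0I: "f0 \<in> I" unfolding f0_def by (rule ideal_mult[OF I gbI])
  have f0A: "polyA ?P f0" unfolding polyA_def lf0 using e0E by blast
  have f0Ip: "(redp f0 :: ('x, 'p mod_ring) mpoly) \<in> ?Ip" by (rule red_in_Ip[OF ts I GBs gs' f0I f0A])
  have pe: "(of_nat ?P ^ e0 :: rat) = of_nat ?P * of_nat ?P ^ (e0 - 1)"
    using e0pos by (metis power_eq_if)
  have nz: "(redp f0 :: ('x, 'p mod_ring) mpoly) \<noteq> 0"
  proof
    assume "(redp f0 :: ('x, 'p mod_ring) mpoly) = 0"
    hence "(red_rat (Poly_Mapping.lookup f0 t0) :: 'p mod_ring) = 0"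
      using lookup_red[of f0 t0, where 'p='p] by simp
    moreover have "intA ?P (Poly_Mapping.lookup f0 t0)" using f0A unfolding polyA_def by blast
    ultimately have "intA ?P (Poly_Mapping.lookup f0 t0 / of_nat ?P)"
      using red_zero_div[where 'p='p] by blast
    moreover have "Poly_Mapping.lookup f0 t0 / of_nat ?P = of_nat ?P ^ (e0 - 1) * Poly_Mapping.lookup gb t0"
      unfolding lf0 pe using prime_card[where 'a='p] by (simp add: prime_gt_0_nat)
    ultimately show False using t0 by simp
  qed
  have ltb0: "Poly_Mapping.lookup (redp f0 :: ('x, 'p mod_ring) mpoly) ?tb = 0"
  proof -
    have "Poly_Mapping.lookup f0 ?tb = of_nat ?P * of_nat ?P ^ (e0 - 1)"
      unfolding lf0 pe using gb1 by (simp add: lc_def)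
    moreover have "intA ?P (of_nat ?P ^ (e0 - 1) * 1)"
      using intA_pow_mult[OF prime_card[where 'a='p] intA_of_int[OF card_ne1[where 'p='p], of 1], of "e0 - 1"]
      by simp
    ultimately show ?thesis using red_p_mult[where 'p='p] by (simp add: lookup_red)
  qed
  let ?s = "lt \<tau> (redp f0 :: ('x, 'p mod_ring) mpoly)"
  have sk: "?s \<in> Poly_Mapping.keys (redp f0 :: ('x, 'p mod_ring) mpoly)" by (rule lt_in_keys[OF to nz])
  hence sf0: "?s \<in> Poly_Mapping.keys f0" using keys_red by blast
  have sgb: "?s \<in> Poly_Mapping.keys gb"
    using sf0 unfolding in_keys_iff lf0 by simp
  have sneq: "?s \<noteq> ?tb" using sk ltb0 by (auto simp: in_keys_iff)
  have sle: "\<tau> ?s ?tb" by (rule lt_max[OF to sgb])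
  have sL': "?s \<in> ?L'" using f0Ip nz unfolding LTs_def by blast
  have sL: "?s \<notin> ?L"
  proof
    assume "?s \<in> ?L"
    then obtain f where f: "f \<in> I" "f \<noteq> 0" "?s = lt \<tau> f" unfolding LTs_def by blast
    obtain g w where g: "g \<in> G\<tau>" "g \<noteq> 0" "lc \<tau> g = 1" "g \<in> I" "lt \<tau> f = w + lt \<tau> g"
      using GB_div[OF GBt f(1,2)] by blast
    have dv: "pp_dvd (lt \<tau> g) ?s" using f(3) g(5) unfolding pp_dvd_def by (metis add.commute)
    show False
    proof (cases "g = gb")
      case True
      hence "\<tau> ?tb ?s" using to_dvd[OF to dv] by simp
      thus False using to_antisym[OF to, of ?s ?tb] sle sneq by auto
    next
      case False
      thus False using red[rule_format, of gb g ?s] gbG g(1) sgb dv by auto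
    qed
  qed
  obtain m where m: "m \<in> ?L' - ?L" "\<forall>y. (y, m) \<in> strict \<tau> \<longrightarrow> y \<notin> ?L' - ?L"
    using wfE_min[OF wf_strict[OF to], of ?s "?L' - ?L"] sL sL' by blast
  have ms: "\<tau> m ?s"
  proof (rule ccontr)
    assume "\<not> \<tau> m ?s"
    hence "(?s, m) \<in> strict \<tau>" using to_total[OF to, of m ?s] unfolding strict_def by auto
    thus False using m(2) sL sL' by blast
  qed
  have mtb: "?R m ?tb"
  proof
    show "\<tau> m ?tb" using ms sle to_trans[OF to] by blast
    have "?tb \<in> ?L" using gbI gb0 unfolding LTs_def by blast
    thus "m \<noteq> ?tb" using m(1) by blast
  qed
  have agree: "w \<in> ?L \<longleftrightarrow> w \<in> ?L'" if "(w, m) \<in> strict \<tau>" for w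
  proof
    assume "w \<in> ?L"
    moreover have "(w, ?tb) \<in> strict \<tau>"
      using that mtb to_trans[OF to] to_antisym[OF to] unfolding strict_def by blast
    ultimately show "w \<in> ?L'" using small by blast
  next
    assume "w \<in> ?L'" thus "w \<in> ?L" using m(2) that by blast
  qed
  let ?S = "min_gens \<tau> I" and ?S' = "min_gens \<tau> ?Ip"
  have mS': "m \<in> ?S'"
    unfolding min_gens_def
  proof (intro CollectI conjI ballI impI)
    show "m \<in> ?L'" using m(1) by blast
    fix v assume v: "v \<in> ?L'" "pp_dvd v m"
    show "v = m"
    proof (rule ccontr)
      assume "v \<noteq> m"
      hence "(v, m) \<in> strict \<tau>" using to_dvd[OF to v(2)] unfolding strict_def by blast
      hence "v \<in> ?L" using agree v(1) by blast
      hence "m \<in> ?L" using LTs_dvd[OF to I _ v(2)] by blast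
      thus False using m(1) by blast
    qed
  qed
  have mS: "m \<notin> ?S" using m(1) unfolding min_gens_def by blast
  have agreeS: "\<forall>u. ?R u m \<longrightarrow> (u \<in> ?S \<longleftrightarrow> u \<in> ?S')"
  proof (intro allI impI)
    fix u assume um: "?R u m"
    have um': "(u, m) \<in> strict \<tau>" using um unfolding strict_def by blast
    have dvs: "(v, m) \<in> strict \<tau>" if "pp_dvd v u" for v
      using to_dvd[OF to that] um to_trans[OF to] to_antisym[OF to] unfolding strict_def by blast
    have "(u \<in> ?L \<and> (\<forall>v\<in>?L. pp_dvd v u \<longrightarrow> v = u)) \<longleftrightarrow> (u \<in> ?L' \<and> (\<forall>v\<in>?L'. pp_dvd v u \<longrightarrow> v = u))"
      using agree[OF um'] agree[OF dvs] by blast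
    thus "u \<in> ?S \<longleftrightarrow> u \<in> ?S'" unfolding min_gens_def by blast
  qed
  have tbS: "?tb \<in> ?S"
    unfolding min_gens_def
  proof (intro CollectI conjI ballI impI)
    show "?tb \<in> ?L" using gbI gb0 unfolding LTs_def by blast
    fix v assume v: "v \<in> ?L" "pp_dvd v ?tb"
    obtain f where f: "f \<in> I" "f \<noteq> 0" "v = lt \<tau> f" using v(1) unfolding LTs_def by blast
    obtain g w where g: "g \<in> G\<tau>" "g \<noteq> 0" "lc \<tau> g = 1" "g \<in> I" "lt \<tau> f = w + lt \<tau> g"
      using GB_div[OF GBt f(1,2)] by blast
    have dv: "pp_dvd (lt \<tau> g) v" using f(3) g(5) unfolding pp_dvd_def by (metis add.commute)
    hence dv2: "pp_dvd (lt \<tau> g) ?tb" using v(2) pp_dvd_trans by blast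
    have "g = gb"
    proof (rule ccontr)
      assume "g \<noteq> gb"
      thus False using red[rule_format, of gb g ?tb] gbG g(1) lt_in_keys[OF to gb0] dv2 by auto
    qed
    thus "v = ?tb" using pp_dvd_antisym[OF to v(2)] dv by simp
  qed
  let ?T = "O_tuple \<tau> I" and ?T' = "O_tuple \<tau> ?Ip"
  have T: "set ?T = ?S" "sorted_wrt ?R ?T" using O_tuple_prop[OF to] by blast+
  have T': "set ?T' = ?S'" "sorted_wrt ?R ?T'" using O_tuple_prop[OF to] by blast+
  have tot: "\<forall>a b. a \<noteq> b \<longrightarrow> ?R a b \<or> ?R b a" using to_total[OF to] by blast
  have tr: "\<forall>a b c. ?R a b \<longrightarrow> ?R b c \<longrightarrow> ?R a c" using to_trans[OF to] to_antisym[OF to] by blast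
  have asy: "\<forall>a b. ?R a b \<longrightarrow> \<not> ?R b a" using to_antisym[OF to] by blast
  obtain k where k: "k < min (length ?T) (length ?T')" "take k ?T' = take k ?T" "?T' ! k = m" "?R m (?T ! k)"
    using first_diff[OF tot tr asy T(2) T'(2), of m] mS' mS agreeS tbS mtb T T' by auto
  have "tuple_less \<tau> ?T' ?T"
    unfolding tuple_less_def using k by auto
  moreover have "\<not> proper_prefix_of ?T ?T'"
  proof
    assume "proper_prefix_of ?T ?T'"
    hence "take (length ?T) ?T' = ?T" unfolding proper_prefix_of_def by blast
    hence "?T' ! k = ?T ! k" using k(1) by (metis min_less_iff_conj nth_take)
    thus False using k(3,4) by simp
  qed
  ultimately show ?thesis by blast
qed

theorem theorem4p13:
  fixes \<sigma> \<tau> :: "('x::finite) pp \<Rightarrow> 'x pp \<Rightarrow> bool"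
    and I G\<sigma> G\<tau> :: "('x, rat) mpoly set"
  assumes "term_order \<sigma>" and "term_order \<tau>"
    and "is_ideal I" and "I \<noteq> {0}"
    and "is_reduced_GB \<sigma> I G\<sigma>" and "is_reduced_GB \<tau> I G\<tau>"
    and "good G\<sigma> CARD('p::prime_card)"
  shows "(good G\<tau> CARD('p) \<longrightarrow>
            O_tuple \<tau> (ideal_gen ((red_poly :: ('x, rat) mpoly \<Rightarrow> ('x, 'p mod_ring) mpoly) ` G\<sigma>))
              = O_tuple \<tau> I)
       \<and> (\<not> good G\<tau> CARD('p) \<longrightarrow>
            tuple_less \<tau> (O_tuple \<tau> (ideal_gen ((red_poly :: ('x, rat) mpoly \<Rightarrow> ('x, 'p mod_ring) mpoly) ` G\<sigma>)))
              (O_tuple \<tau> I)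
          \<and> \<not> proper_prefix_of (O_tuple \<tau> I)
              (O_tuple \<tau> (ideal_gen ((red_poly :: ('x, rat) mpoly \<Rightarrow> ('x, 'p mod_ring) mpoly) ` G\<sigma>))))"
proof (intro conjI impI)
  assume gt: "good G\<tau> CARD('p)"
  have "LTs \<tau> (ideal_gen ((red_poly :: ('x, rat) mpoly \<Rightarrow> ('x, 'p mod_ring) mpoly) ` G\<sigma>)) = LTs \<tau> I"
    by (rule LTs_eq_good[OF assms(1,2,3,5,6,7) gt])
  thus "O_tuple \<tau> (ideal_gen ((red_poly :: ('x, rat) mpoly \<Rightarrow> ('x, 'p mod_ring) mpoly) ` G\<sigma>))
              = O_tuple \<tau> I"
    unfolding O_tuple_def min_gens_def by simp
next
  assume bt: "\<not> good G\<tau> CARD('p)"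
  show "tuple_less \<tau> (O_tuple \<tau> (ideal_gen ((red_poly :: ('x, rat) mpoly \<Rightarrow> ('x, 'p mod_ring) mpoly) ` G\<sigma>)))
              (O_tuple \<tau> I)"
    using part_b[OF assms(1,2,3,5,6,7) bt] by blast
  show "\<not> proper_prefix_of (O_tuple \<tau> I)
              (O_tuple \<tau> (ideal_gen ((red_poly :: ('x, rat) mpoly \<Rightarrow> ('x, 'p mod_ring) mpoly) ` G\<sigma>)))"
    using part_b[OF assms(1,2,3,5,6,7) bt] by blast
qed

end
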